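(* Let $A$ be a $J^*$-algebra and let $r>1$. Let $T : A \to A$ be a mapping satisfying $T(rx)=rT(x)$ for all $x\in A$, and suppose there exists a function $\varphi: A\times A\times A\to [0, \infty)$ such that $$\lim_{n\to\infty} r^{-n}\varphi(r^n x, r^n y, r^n z)=0 \quad\text{for all } x,y,z\in A,$$ and $$\|T(\lambda x+y+zz^*z)-\lambda T(x)-T(y)-T(z)T(z)^*T(z)\|\leq\varphi(x, y, z)$$ for all $\lambda \in \mathbb{C}$ and all $x, y, z\in A$. Then $T$ is a $J^*$-homomorphism.
   Context: A $J^*$-algebra is a norm-closed complex linear subspace $A$ of a $C^*$-algebra such that $xx^*x\in A$ whenever $x\in A$ (with the norm, involution and product inherited from the ambient $C^*$-algebra). For $J^*$-algebras $A$ and $B$, a $J^*$-homomorphism is a $\mathbb{C}$-linear mapping $T : A \to B$ such that $T(xx^*x)=T(x)T(x)^*T(x)$ for all $x\in A$. *)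

theory Defs
  imports "HOL-Analysis.Analysis"
begin

text \<open>An ambient C*-algebra is
  modelled as a Banach algebra type (over the reals) together with an explicit complex scalar
  multiplication cs extending the real one, and an involution star, subject to the C*-axioms.\<close>

definition cstar_algebra ::
  "(complex \<Rightarrow> 'a::{real_normed_algebra,banach} \<Rightarrow> 'a) \<Rightarrow> ('a \<Rightarrow> 'a) \<Rightarrow> bool" where
  "cstar_algebra cs star \<longleftrightarrow>
     (\<forall>x. cs 1 x = x) \<and>
     (\<forall>a b x. cs (a * b) x = cs a (cs b x)) \<and>
     (\<forall>a b x. cs (a + b) x = cs a x + cs b x) \<and>
     (\<forall>a x y. cs a (x + y) = cs a x + cs a y) \<and>
     (\<forall>t x. cs (complex_of_real t) x = scaleR t x) \<and>
     (\<forall>a x. norm (cs a x) = cmod a * norm x) \<and>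
     (\<forall>a x y. cs a (x * y) = cs a x * y) \<and>
     (\<forall>a x y. cs a (x * y) = x * cs a y) \<and>
     (\<forall>x. star (star x) = x) \<and>
     (\<forall>x y. star (x + y) = star x + star y) \<and>
     (\<forall>a x. star (cs a x) = cs (cnj a) (star x)) \<and>
     (\<forall>x y. star (x * y) = star y * star x) \<and>
     (\<forall>x. norm (star x * x) = (norm x)\<^sup>2)"

definition jstar_algebra ::
  "(complex \<Rightarrow> 'a::{real_normed_algebra,banach} \<Rightarrow> 'a) \<Rightarrow> ('a \<Rightarrow> 'a) \<Rightarrow> 'a set \<Rightarrow> bool" where
  "jstar_algebra cs star A \<longleftrightarrow>
     cstar_algebra cs star \<and> closed A \<and> 0 \<in> A \<and>
     (\<forall>x\<in>A. \<forall>y\<in>A. x + y \<in> A) \<and>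
     (\<forall>a. \<forall>x\<in>A. cs a x \<in> A) \<and>
     (\<forall>x\<in>A. x * star x * x \<in> A)"

definition jstar_hom ::
  "(complex \<Rightarrow> 'a::{real_normed_algebra,banach} \<Rightarrow> 'a) \<Rightarrow> ('a \<Rightarrow> 'a) \<Rightarrow> 'a set \<Rightarrow> 'a set
     \<Rightarrow> ('a \<Rightarrow> 'a) \<Rightarrow> bool" where
  "jstar_hom cs star A B T \<longleftrightarrow>
     (\<forall>x\<in>A. T x \<in> B) \<and>
     (\<forall>x\<in>A. \<forall>y\<in>A. T (x + y) = T x + T y) \<and>
     (\<forall>a. \<forall>x\<in>A. T (cs a x) = cs a (T x)) \<and>
     (\<forall>x\<in>A. T (x * star x * x) = T x * star (T x) * T x)"

end

theory Submission
  imports Defs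
begin

lemma zero_from_bound:
  fixes D :: "'a::real_normed_vector"
  assumes "\<And>n. norm D \<le> g n" and "g \<longlonglongrightarrow> 0"
  shows "D = 0"
proof -
  have "norm D \<le> 0"
    using assms by (intro LIMSEQ_le_const[OF assms(2)]) auto
  thus ?thesis by simp
qed

theorem proposition2p1:
  fixes cs :: "complex \<Rightarrow> 'a::{real_normed_algebra,banach} \<Rightarrow> 'a"
    and star :: "'a \<Rightarrow> 'a"
    and A :: "'a set"
    and r :: real
    and T :: "'a \<Rightarrow> 'a"
    and \<phi> :: "'a \<Rightarrow> 'a \<Rightarrow> 'a \<Rightarrow> real"
  assumes JA: "jstar_algebra cs star A"
    and r: "r > 1"
    and TA: "\<forall>x\<in>A. T x \<in> A"
    and hom_r: "\<forall>x\<in>A. T (scaleR r x) = scaleR r (T x)"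
    and phi_nonneg: "\<forall>x\<in>A. \<forall>y\<in>A. \<forall>z\<in>A. \<phi> x y z \<ge> 0"
    and phi_lim: "\<forall>x\<in>A. \<forall>y\<in>A. \<forall>z\<in>A.
         (\<lambda>n. \<phi> (scaleR (r ^ n) x) (scaleR (r ^ n) y) (scaleR (r ^ n) z) / r ^ n)
           \<longlonglongrightarrow> 0"
    and approx: "\<forall>c. \<forall>x\<in>A. \<forall>y\<in>A. \<forall>z\<in>A.
         norm (T (cs c x + y + z * star z * z) - cs c (T x) - T y - T z * star (T z) * T z)
           \<le> \<phi> x y z"
  shows "jstar_hom cs star A A T"
proof -
  have CS: "cstar_algebra cs star" and A0: "0 \<in> A"
    and Aadd: "\<And>x y. x \<in> A \<Longrightarrow> y \<in> A \<Longrightarrow> x + y \<in> A"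
    and Acs: "\<And>a x. x \<in> A \<Longrightarrow> cs a x \<in> A"
    and Atr: "\<And>x. x \<in> A \<Longrightarrow> x * star x * x \<in> A"
    using JA unfolding jstar_algebra_def by auto
  have csR: "\<And>t x. cs (complex_of_real t) x = scaleR t x"
    and csmul: "\<And>a b x. cs (a * b) x = cs a (cs b x)"
    and csnorm: "\<And>a x. norm (cs a x) = cmod a * norm x"
    and starcs: "\<And>a x. star (cs a x) = cs (cnj a) (star x)"
    using CS unfolding cstar_algebra_def by auto
  have AR: "\<And>t x. x \<in> A \<Longrightarrow> scaleR t x \<in> A"
    using Acs csR by metis
  have cs0: "\<And>c. cs c 0 = 0" using csnorm by (metis mult_zero_right norm_eq_zero norm_zero)
  have csscale: "\<And>c t x. cs c (scaleR t x) = scaleR t (cs c x)"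
  proof -
    fix c t x
    have "cs c (scaleR t x) = cs (c * complex_of_real t) x" by (simp add: csmul csR)
    also have "\<dots> = cs (complex_of_real t * c) x" by (simp add: mult.commute)
    also have "\<dots> = scaleR t (cs c x)" by (simp add: csmul csR)
    finally show "cs c (scaleR t x) = scaleR t (cs c x)" .
  qed
  have starR: "\<And>t x. star (scaleR t x) = scaleR t (star x)"
    by (metis csR starcs complex_cnj_complex_of_real)
  have rpos: "\<And>n. r ^ n > 0" using r by simp
  have T0: "T 0 = 0"
  proof -
    have "T 0 = scaleR r (T 0)" using hom_r A0 by (metis scale_zero_right)
    hence "(r - 1) *\<^sub>R T 0 = 0" by (simp add: algebra_simps)
    thus ?thesis using r by simp
  qed
  have Tpow: "\<And>n x. x \<in> A \<Longrightarrow> T (scaleR (r ^ n) x) = scaleR (r ^ n) (T x)"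
  proof -
    fix n x assume x: "x \<in> A"
    show "T (scaleR (r ^ n) x) = scaleR (r ^ n) (T x)"
    proof (induction n)
      case 0 then show ?case by simp
    next
      case (Suc n)
      have "T (scaleR (r ^ Suc n) x) = T (scaleR r (scaleR (r ^ n) x))" by simp
      also have "\<dots> = scaleR r (T (scaleR (r ^ n) x))" using hom_r AR[OF x] by blast
      also have "\<dots> = scaleR (r ^ Suc n) (T x)" using Suc by simp
      finally show ?case .
    qed
  qed
  have lim: "\<And>x y z. x \<in> A \<Longrightarrow> y \<in> A \<Longrightarrow> z \<in> A \<Longrightarrow>
      (\<lambda>n. \<phi> (scaleR (r ^ n) x) (scaleR (r ^ n) y) (scaleR (r ^ n) z) / r ^ n) \<longlonglongrightarrow> 0"
    using phi_lim by blast
  have add: "\<forall>x\<in>A. \<forall>y\<in>A. T (x + y) = T x + T y"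
  proof (intro ballI)
    fix x y assume x: "x \<in> A" and y: "y \<in> A"
    show "T (x + y) = T x + T y"
    proof -
      have "T (x + y) - T x - T y = 0"
      proof (rule zero_from_bound[OF _ lim[OF x y A0]])
        fix n
        have "norm (T (cs 1 (scaleR (r^n) x) + scaleR (r^n) y + 0 * star 0 * 0) - cs 1 (T (scaleR (r^n) x))
              - T (scaleR (r^n) y) - T 0 * star (T 0) * T 0) \<le> \<phi> (scaleR (r^n) x) (scaleR (r^n) y) 0"
          using approx AR x y A0 by blast
        moreover have "cs 1 = (\<lambda>x. x)" using CS unfolding cstar_algebra_def by auto
        ultimately have "norm (T (scaleR (r^n) (x + y)) - T (scaleR (r^n) x) - T (scaleR (r^n) y))
            \<le> \<phi> (scaleR (r^n) x) (scaleR (r^n) y) (scaleR (r^n) 0)"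
          by (simp add: T0 scaleR_right_distrib)
        hence "r^n * norm (T (x + y) - T x - T y) \<le> \<phi> (scaleR (r^n) x) (scaleR (r^n) y) (scaleR (r^n) 0)"
          using Tpow[OF Aadd[OF x y]] Tpow[OF x] Tpow[OF y] rpos[of n]
          by (simp add: scaleR_diff_right[symmetric])
        thus "norm (T (x + y) - T x - T y) \<le> \<phi> (scaleR (r^n) x) (scaleR (r^n) y) (scaleR (r^n) 0) / r^n"
          using rpos[of n] by (simp add: field_simps)
      qed
      thus ?thesis by (simp add: algebra_simps)
    qed
  qed
  have lin: "\<forall>a. \<forall>x\<in>A. T (cs a x) = cs a (T x)"
  proof (intro allI ballI)
    fix c x assume x: "x \<in> A"
    have "T (cs c x) - cs c (T x) = 0"
    proof (rule zero_from_bound[OF _ lim[OF x A0 A0]])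
      fix n
      have "norm (T (cs c (scaleR (r^n) x) + 0 + 0 * star 0 * 0) - cs c (T (scaleR (r^n) x))
            - T 0 - T 0 * star (T 0) * T 0) \<le> \<phi> (scaleR (r^n) x) 0 0"
        using approx AR x A0 by blast
      hence "norm (T (scaleR (r^n) (cs c x)) - scaleR (r^n) (cs c (T x)))
            \<le> \<phi> (scaleR (r^n) x) (scaleR (r^n) 0) (scaleR (r^n) 0)"
        by (simp add: T0 csscale Tpow[OF x])
      hence "r^n * norm (T (cs c x) - cs c (T x)) \<le> \<phi> (scaleR (r^n) x) (scaleR (r^n) 0) (scaleR (r^n) 0)"
        using Tpow[OF Acs[OF x]] rpos[of n]
        by (simp add: scaleR_diff_right[symmetric])
      thus "norm (T (cs c x) - cs c (T x)) \<le> \<phi> (scaleR (r^n) x) (scaleR (r^n) 0) (scaleR (r^n) 0) / r^n"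
        using rpos[of n] by (simp add: field_simps)
    qed
    thus "T (cs c x) = cs c (T x)" by simp
  qed
  have trip: "\<forall>z\<in>A. T (z * star z * z) = T z * star (T z) * T z"
  proof (intro ballI)
    fix z assume z: "z \<in> A"
    have "T (z * star z * z) - T z * star (T z) * T z = 0"
    proof (rule zero_from_bound[OF _ lim[OF A0 A0 z]])
      fix n
      define a where "a = r ^ n"
      have apos: "a > 0" using rpos a_def by simp
      have a1: "a \<ge> 1" unfolding a_def using r by simp
      have "norm (T (cs 1 0 + 0 + (scaleR a z) * star (scaleR a z) * (scaleR a z)) - cs 1 (T 0)
            - T 0 - T (scaleR a z) * star (T (scaleR a z)) * T (scaleR a z)) \<le> \<phi> 0 0 (scaleR a z)"
        using approx AR z A0 by blast
      hence "norm (T (scaleR a (scaleR a (scaleR a (z * star z * z))))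
           - scaleR a (scaleR a (scaleR a (T z * star (T z) * T z)))) \<le> \<phi> 0 0 (scaleR a z)"
        by (simp add: T0 cs0 starR Tpow[OF z, of n, folded a_def])
      moreover have "T (scaleR a (scaleR a (scaleR a (z * star z * z))))
          = scaleR a (scaleR a (scaleR a (T (z * star z * z))))"
        unfolding a_def using Tpow AR Atr[OF z] by metis
      ultimately have "a * (a * (a * norm (T (z * star z * z) - T z * star (T z) * T z))) \<le> \<phi> 0 0 (scaleR a z)"
        using apos by (simp add: scaleR_diff_right[symmetric])
      moreover have "a * norm (T (z * star z * z) - T z * star (T z) * T z)
          \<le> a * (a * (a * norm (T (z * star z * z) - T z * star (T z) * T z)))"
      proof -
        let ?N = "norm (T (z * star z * z) - T z * star (T z) * T z)"
        have "?N \<le> a * ?N" using a1 by (simp add: mult_le_cancel_right1)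
        hence "?N \<le> a * (a * ?N)" using a1 
          by (meson dual_order.trans mult_le_cancel_right1 mult_left_mono apos less_imp_le norm_ge_zero zero_le_mult_iff)
        thus ?thesis using apos by simp
      qed
      ultimately have "a * norm (T (z * star z * z) - T z * star (T z) * T z) \<le> \<phi> 0 0 (scaleR a z)"
        by linarith
      thus "norm (T (z * star z * z) - T z * star (T z) * T z) \<le> \<phi> (scaleR (r^n) 0) (scaleR (r^n) 0) (scaleR (r^n) z) / r^n"
        using apos unfolding a_def[symmetric] by (simp add: field_simps)
    qed
    thus "T (z * star z * z) = T z * star (T z) * T z" by simp
  qed
  show ?thesis unfolding jstar_hom_def using TA add lin trip by blast
qed

end
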